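(* Let $M$ be an observable FSM with $n$ states, all reachable, such that the initial state $s_0$ is the only d-reachable state of $M$ and no two distinct states of $M$ are r-distinguishable. Let $m\ge n$. Then (i) every $\bar x/\bar y\in L_M(s_0)$ of length $mn$ has a prefix $\pi$ with $term(s_0,\pi,m)\neq\varnothing$, so $Tr(s_0,m)\subseteq\bigcup_{i=0}^{mn}\Sigma_I^i$; and (ii) every test suite $T$ produced by $\textsc{GenerateTestSuite}(M,m)$ satisfies $|T|\le|\Sigma_I|^{mn}$.
   Context: FSMs and notation. An FSM is $M=(S,s_0,\Sigma_I,\Sigma_O,h_M)$ with finite state set $S$, initial state $s_0$, finite input/output alphabets and $h_M\subseteq S\times\Sigma_I\times\Sigma_O\times S$. IO sequences are written $\bar x/\bar y$. $L_M(s)$ is the set of IO sequences $x_1\dots x_k/y_1\dots y_k$ such that there are states $s=q_0,\dots,q_k$ with $(q_{i-1},x_i,y_i,q_i)\in h_M$; $L(M)=L_M(s_0)$. $out(s,x)=\{y\mid\exists s'.(s,x,y,s')\in h_M\}$. $M$ is observable if for all $s,x,y$ at most one $s'$ has $(s,x,y,s')\in h_M$; then $s\text{-after-}\alpha$ is the unique state reached from $s$ by $\alpha\in L_M(s)$. $\Delta_M(s)=\{x\mid out(s,x)\neq\varnothing\}$. $\mathrm{Pref}$ denotes the set of prefixes (including $\epsilon$), lifted to sets; $A.B=\{a.b\mid a\in A,b\in B\}$ with $A.\varnothing=A$. d-reachability and state cover. $\bar x$ is strongly defined in $M$ if for every prefix $\bar x_1.x$ of $\bar x$ ($x\in\Sigma_I$)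 and every $\bar x_1/\bar y_1\in L(M)$, $x\in\Delta_M(s_0\text{-after-}\bar x_1/\bar y_1)$. $\bar x$ d-reaches $s$ if $\bar x$ is strongly defined and $\{s_0\text{-after-}\bar x/\bar y\mid \bar x/\bar y\in L(M)\}=\{s\}$. For $S'\subseteq S$, $\widehat{S'}$ is the set of states in $S'$ d-reached by some input sequence. A state cover $V$ is a set consisting of $\epsilon$ (which d-reaches $s_0$) and, for every other d-reachable state, exactly one input sequence d-reaching it; for $s\in\widehat S$ let $\bar v_s\in V$ be the element d-reaching $s$. $V'=\{\bar x/\bar y\in L(M)\mid \bar x\in V\}$. r-distinguishability. Every $W\subseteq\Sigma_I^*$ r(0)-distinguishes states $s_1,s_2$ with $\Delta_M(s_1)\neq\Delta_M(s_2)$. For $k\ge0$, $W$ r($k+1$)-distinguishes $s_1,s_2$ if it r($k$)-distinguishes them, or there is $x\in\Delta_M(s_1)\cap\Delta_M(s_2)\cap\mathrm{Pref}(W)$ such that for every $y\in out(s_1,x)\cap out(s_2,x)$ some $W'$ with $\{x\}.W'\subseteq\mathrm{Pref}(W)$ r($k$)-distinguishes $s_1\text{-after-}x/y$ and $s_2\text{-after-}x/y$. $W$ r-distinguishes $s_1,s_2$ if it r($k$)-distinguishes them for some $k$; states are r-distinguishable if some $W$ r-distinguishes them. $S_D$ is the set of all maximal (w.r.t. inclusion) subsets of $S$ whose elements are pairwise r-distinguishable (a state r-distinguishable from no other state yields a singleton). Termination and traversal sets. For $s\in\widehat S$, $\bar x/\bar y\in L_M(s)$ and $S'\in S_D$,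 say $S'$ terminates $\bar x/\bar y$ for $s$ and $m$ if the number of nonempty prefixes $\pi$ of $\bar x/\bar y$ with $s\text{-after-}\pi\in S'$ equals $m-|\widehat{S'}|+1$ and no proper prefix of $\bar x/\bar y$ is terminated for $s$ and $m$ by any element of $S_D$. $term(s,\bar x/\bar y,m)$ is the set of such $S'$. $Tr(s,m)=\mathrm{Pref}\{\bar x\mid\exists\bar y.\ \bar x/\bar y\in L_M(s)\wedge term(s,\bar x/\bar y,m)\neq\varnothing\}$. Procedure $\textsc{GenerateTestSuite}(M,m)$: (1) Choose a state cover $V$, form $V'$, and set $T:=\bigcup_{s\in\widehat S}\{\bar v_s\}.Tr(s,m)$. (2) Let $D=\{(s,\bar x/\bar y)\mid s\in\widehat S,\ \bar x/\bar y\in L_M(s),\ term(s,\bar x/\bar y,m)\neq\varnothing\}$. For each $(s,\bar x/\bar y)\in D$: choose some $S_i\in term(s,\bar x/\bar y,m)$; then for every pair of traces $\bar x_1/\bar y_1,\bar x_2/\bar y_2$ in $V'\cup\{\beta.\pi\mid \beta\in V'\text{ with input portion }\bar v_s,\ \pi\in\mathrm{Pref}(\bar x/\bar y)\}$, let $s_j=s_0\text{-after-}\bar x_j/\bar y_j$; if $s_1\neq s_2$ and $s_1,s_2\in S_i$, let $W'=\{\bar x'\mid \bar x_1.\bar x'\in\mathrm{Pref}(T)\text{ and }\bar x_2.\bar x'\in\mathrm{Pref}(T)\}$ (for the current $T$); if $W'$ does not r-distinguish $s_1,s_2$, choose any $W$ that r-distinguishes $s_1,s_2$ and set $T:=T\cup\{\bar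 x_1,\bar x_2\}.W$. (3) Finally remove from $T$ every sequence that is a proper prefix of another element of $T$, and return $T$. *)

theory Defs
  imports Main "HOL-Library.Sublist"
begin

record ('s, 'x, 'y) fsm =
  states  :: "'s set"
  initial :: 's
  inputs  :: "'x set"
  outputs :: "'y set"
  trans   :: "('s \<times> 'x \<times> 'y \<times> 's) set"

definition well_formed :: "('s, 'x, 'y) fsm \<Rightarrow> bool" where
  "well_formed M \<longleftrightarrow> finite (states M) \<and> initial M \<in> states M
     \<and> finite (inputs M) \<and> inputs M \<noteq> {} \<and> finite (outputs M)
     \<and> trans M \<subseteq> states M \<times> inputs M \<times> outputs M \<times> states M"

type_synonym ('x, 'y) io = "('x \<times> 'y) list"

fun is_trace :: "('s, 'x, 'y) fsm \<Rightarrow> 's \<Rightarrow> ('x, 'y) io \<Rightarrow> bool" where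
  "is_trace M s [] = True"
| "is_trace M s ((x, y) # io) = (\<exists>s'. (s, x, y, s') \<in> trans M \<and> is_trace M s' io)"

definition LS :: "('s, 'x, 'y) fsm \<Rightarrow> 's \<Rightarrow> ('x, 'y) io set" where
  "LS M s = {io. is_trace M s io}"

abbreviation L :: "('s, 'x, 'y) fsm \<Rightarrow> ('x, 'y) io set" where
  "L M \<equiv> LS M (initial M)"

definition out :: "('s, 'x, 'y) fsm \<Rightarrow> 's \<Rightarrow> 'x \<Rightarrow> 'y set" where
  "out M s x = {y. \<exists>s'. (s, x, y, s') \<in> trans M}"

definition defined_inputs :: "('s, 'x, 'y) fsm \<Rightarrow> 's \<Rightarrow> 'x set" where
  "defined_inputs M s = {x. out M s x \<noteq> {}}"

definition observable :: "('s, 'x, 'y) fsm \<Rightarrow> bool" where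
  "observable M \<longleftrightarrow> (\<forall>s x y s1 s2. (s, x, y, s1) \<in> trans M \<and> (s, x, y, s2) \<in> trans M \<longrightarrow> s1 = s2)"

text \<open>s-after-io (meaningful for observable M and io in L_M(s)).\<close>
fun after :: "('s, 'x, 'y) fsm \<Rightarrow> 's \<Rightarrow> ('x, 'y) io \<Rightarrow> 's" where
  "after M s [] = s"
| "after M s ((x, y) # io) = after M (THE s'. (s, x, y, s') \<in> trans M) io"

definition reachable :: "('s, 'x, 'y) fsm \<Rightarrow> 's \<Rightarrow> bool" where
  "reachable M s \<longleftrightarrow> (\<exists>io \<in> L M. after M (initial M) io = s)"

definition Pref :: "'a list set \<Rightarrow> 'a list set" where
  "Pref A = {p. \<exists>a \<in> A. prefix p a}"

definition dot :: "'a list set \<Rightarrow> 'a list set \<Rightarrow> 'a list set" where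
  "dot A B = (if B = {} then A else {a @ b | a b. a \<in> A \<and> b \<in> B})"

definition strongly_defined :: "('s, 'x, 'y) fsm \<Rightarrow> 'x list \<Rightarrow> bool" where
  "strongly_defined M xs \<longleftrightarrow>
     (\<forall>i < length xs. \<forall>ys. length ys = i \<and> zip (take i xs) ys \<in> L M
        \<longrightarrow> xs ! i \<in> defined_inputs M (after M (initial M) (zip (take i xs) ys)))"

definition d_reaches :: "('s, 'x, 'y) fsm \<Rightarrow> 'x list \<Rightarrow> 's \<Rightarrow> bool" where
  "d_reaches M xs s \<longleftrightarrow> strongly_defined M xs \<and>
     {after M (initial M) (zip xs ys) | ys. length ys = length xs \<and> zip xs ys \<in> L M} = {s}"

text \<open>The set of d-reachable states (\<open>\<widehat>S\<close>); \<open>\<widehat>S'\<close> is \<open>S' \<inter> d_reachable_states M\<close>.\<close>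
definition d_reachable_states :: "('s, 'x, 'y) fsm \<Rightarrow> 's set" where
  "d_reachable_states M = {s \<in> states M. \<exists>xs. d_reaches M xs s}"

definition state_cover :: "('s, 'x, 'y) fsm \<Rightarrow> 'x list set \<Rightarrow> bool" where
  "state_cover M V \<longleftrightarrow> [] \<in> V \<and> (\<forall>v \<in> V. \<exists>s \<in> d_reachable_states M. d_reaches M v s)
     \<and> (\<forall>s \<in> d_reachable_states M. \<exists>!v. v \<in> V \<and> d_reaches M v s)"

definition cover_seq :: "('s, 'x, 'y) fsm \<Rightarrow> 'x list set \<Rightarrow> 's \<Rightarrow> 'x list" where
  "cover_seq M V s = (THE v. v \<in> V \<and> d_reaches M v s)"

definition cover_traces :: "('s, 'x, 'y) fsm \<Rightarrow> 'x list set \<Rightarrow> ('x, 'y) io set" where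
  "cover_traces M V = {io \<in> L M. map fst io \<in> V}"

fun r_dist :: "('s, 'x, 'y) fsm \<Rightarrow> nat \<Rightarrow> 'x list set \<Rightarrow> 's \<Rightarrow> 's \<Rightarrow> bool" where
  "r_dist M 0 W s1 s2 = (defined_inputs M s1 \<noteq> defined_inputs M s2)"
| "r_dist M (Suc k) W s1 s2 =
     (r_dist M k W s1 s2 \<or>
      (\<exists>x \<in> defined_inputs M s1 \<inter> defined_inputs M s2. [x] \<in> Pref W \<and>
         (\<forall>y \<in> out M s1 x \<inter> out M s2 x. \<exists>W'. dot {[x]} W' \<subseteq> Pref W \<and>
             r_dist M k W' (after M s1 [(x, y)]) (after M s2 [(x, y)]))))"

definition r_distinguishes :: "('s, 'x, 'y) fsm \<Rightarrow> 'x list set \<Rightarrow> 's \<Rightarrow> 's \<Rightarrow> bool" where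
  "r_distinguishes M W s1 s2 \<longleftrightarrow> W \<subseteq> lists (inputs M) \<and> (\<exists>k. r_dist M k W s1 s2)"

definition r_distinguishable :: "('s, 'x, 'y) fsm \<Rightarrow> 's \<Rightarrow> 's \<Rightarrow> bool" where
  "r_distinguishable M s1 s2 \<longleftrightarrow> (\<exists>W. r_distinguishes M W s1 s2)"

definition SD :: "('s, 'x, 'y) fsm \<Rightarrow> 's set set" where
  "SD M = {S'. S' \<subseteq> states M \<and> pairwise (r_distinguishable M) S' \<and>
     (\<forall>S''. S' \<subseteq> S'' \<and> S'' \<subseteq> states M \<and> pairwise (r_distinguishable M) S'' \<longrightarrow> S'' = S')}"

definition visits :: "('s, 'x, 'y) fsm \<Rightarrow> 's \<Rightarrow> ('x, 'y) io \<Rightarrow> 's set \<Rightarrow> nat" where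
  "visits M s io S' = card {i. 1 \<le> i \<and> i \<le> length io \<and> after M s (take i io) \<in> S'}"

function term_set :: "('s, 'x, 'y) fsm \<Rightarrow> 's \<Rightarrow> ('x, 'y) io \<Rightarrow> nat \<Rightarrow> 's set set" where
  "term_set M s io m =
     {S' \<in> SD M. int (visits M s io S') = int m - int (card (S' \<inter> d_reachable_states M)) + 1
        \<and> (\<forall>i \<in> {..<length io}. term_set M s (take i io) m = {})}"
  by pat_completeness auto
termination
  by (relation "measure (\<lambda>(M, s, io, m). length io)") auto

definition Tr :: "('s, 'x, 'y) fsm \<Rightarrow> 's \<Rightarrow> nat \<Rightarrow> 'x list set" where
  "Tr M s m = Pref {map fst io | io. io \<in> LS M s \<and> term_set M s io m \<noteq> {}}"

section \<open>The procedure GenerateTestSuite (as a relation on its possible outputs)\<close>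

definition D_set :: "('s, 'x, 'y) fsm \<Rightarrow> nat \<Rightarrow> ('s \<times> ('x, 'y) io) set" where
  "D_set M m = {(s, io). s \<in> d_reachable_states M \<and> io \<in> LS M s \<and> term_set M s io m \<noteq> {}}"

definition initial_T :: "('s, 'x, 'y) fsm \<Rightarrow> nat \<Rightarrow> 'x list set \<Rightarrow> 'x list set" where
  "initial_T M m V = (\<Union>s \<in> d_reachable_states M. dot {cover_seq M V s} (Tr M s m))"

definition pair_traces :: "('s, 'x, 'y) fsm \<Rightarrow> 'x list set \<Rightarrow> 's \<Rightarrow> ('x, 'y) io \<Rightarrow> ('x, 'y) io set" where
  "pair_traces M V s io = cover_traces M V \<union>
     {\<beta> @ \<pi> | \<beta> \<pi>. \<beta> \<in> cover_traces M V \<and> map fst \<beta> = cover_seq M V s \<and> prefix \<pi> io}"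

text \<open>One iteration of the inner loop of step (2) for a pair of traces.\<close>
definition pair_step :: "('s, 'x, 'y) fsm \<Rightarrow> 's set \<Rightarrow> 'x list set \<Rightarrow>
    ('x, 'y) io \<times> ('x, 'y) io \<Rightarrow> 'x list set \<Rightarrow> bool" where
  "pair_step M Si T p T' \<longleftrightarrow>
     (let t1 = fst p; t2 = snd p;
          s1 = after M (initial M) t1; s2 = after M (initial M) t2;
          W' = {x'. map fst t1 @ x' \<in> Pref T \<and> map fst t2 @ x' \<in> Pref T}
      in if s1 \<noteq> s2 \<and> s1 \<in> Si \<and> s2 \<in> Si \<and> \<not> r_distinguishes M W' s1 s2
         then (\<exists>W. r_distinguishes M W s1 s2 \<and> T' = T \<union> dot {map fst t1, map fst t2} W)
         else T' = T)"

inductive process_pairs :: "('s, 'x, 'y) fsm \<Rightarrow> 's set \<Rightarrow> (('x, 'y) io \<times> ('x, 'y) io) list \<Rightarrow>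
    'x list set \<Rightarrow> 'x list set \<Rightarrow> bool" where
  "process_pairs M Si [] T T"
| "pair_step M Si T p T' \<Longrightarrow> process_pairs M Si ps T' T'' \<Longrightarrow> process_pairs M Si (p # ps) T T''"

inductive process_D :: "('s, 'x, 'y) fsm \<Rightarrow> nat \<Rightarrow> 'x list set \<Rightarrow> ('s \<times> ('x, 'y) io) list \<Rightarrow>
    'x list set \<Rightarrow> 'x list set \<Rightarrow> bool" where
  "process_D M m V [] T T"
| "Si \<in> term_set M s io m \<Longrightarrow>
   distinct ps \<Longrightarrow> set ps = pair_traces M V s io \<times> pair_traces M V s io \<Longrightarrow>
   process_pairs M Si ps T T' \<Longrightarrow> process_D M m V ds T' T'' \<Longrightarrow>
   process_D M m V ((s, io) # ds) T T''"

text \<open>\<open>generated_suite M m T\<close>: T is a possible result of GenerateTestSuite(M, m)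
  (for some choice of state cover, processing order, S_i and W).\<close>
definition generated_suite :: "('s, 'x, 'y) fsm \<Rightarrow> nat \<Rightarrow> 'x list set \<Rightarrow> bool" where
  "generated_suite M m T \<longleftrightarrow>
     (\<exists>V ds Tfin. state_cover M V \<and> distinct ds \<and> set ds = D_set M m
        \<and> process_D M m V ds (initial_T M m V) Tfin
        \<and> T = {t \<in> Tfin. \<not> (\<exists>t' \<in> Tfin. strict_prefix t t')})"

end

theory Submission imports Defs begin

lemma is_trace_take: "is_trace M s io \<Longrightarrow> is_trace M s (take i io)"
proof (induction io arbitrary: s i)
  case Nil then show ?case by simp
next
  case (Cons a io)
  obtain x y where a: "a = (x,y)" by (cases a)
  show ?case
  proof (cases i)
    case 0 then show ?thesis by simp
  next
    case (Suc j) then show ?thesis using Cons a by auto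
  qed
qed

lemma after_states:
  assumes wf: "well_formed M" and obs: "observable M"
  shows "is_trace M s io \<Longrightarrow> s \<in> states M \<Longrightarrow> after M s io \<in> states M"
proof (induction io arbitrary: s)
  case Nil then show ?case by simp
next
  case (Cons a io)
  obtain x y where a: "a = (x,y)" by (cases a)
  from Cons.prems a obtain s' where tr: "(s,x,y,s') \<in> trans M" and t: "is_trace M s' io" by auto
  have the: "(THE s''. (s,x,y,s'') \<in> trans M) = s'"
    using tr obs unfolding observable_def by (intro the_equality) blast+
  have "s' \<in> states M" using tr wf unfolding well_formed_def by auto
  then show ?case using Cons.IH[OF t] a the by simp
qed

lemma trace_inputs:
  assumes wf: "well_formed M"
  shows "is_trace M s io \<Longrightarrow> set (map fst io) \<subseteq> inputs M"
proof (induction io arbitrary: s)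
  case Nil then show ?case by simp
next
  case (Cons a io)
  obtain x y where a: "a = (x,y)" by (cases a)
  from Cons.prems a obtain s' where tr: "(s,x,y,s') \<in> trans M" and t: "is_trace M s' io" by auto
  have "x \<in> inputs M" using tr wf unfolding well_formed_def by auto
  then show ?case using Cons.IH[OF t] a by simp
qed

lemma term_set_unfold:
  "term_set M s io m =
     {S' \<in> SD M. int (visits M s io S') = int m - int (card (S' \<inter> d_reachable_states M)) + 1
        \<and> (\<forall>i \<in> {..<length io}. term_set M s (take i io) m = {})}"
  by (rule term_set.simps)

declare term_set.simps[simp del]

lemma term_set_mem:
  "S \<in> term_set M s io m \<longleftrightarrow> (S \<in> SD M \<and> int (visits M s io S) = int m - int (card (S \<inter> d_reachable_states M)) + 1
        \<and> (\<forall>i<length io. term_set M s (take i io) m = {}))"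
  by (subst term_set_unfold) (simp only: mem_Collect_eq lessThan_iff Ball_def)

lemma SD_sub:
  assumes "S' \<in> SD M" "initial M \<in> states M"
    and nd: "\<forall>s1 \<in> states M. \<forall>s2 \<in> states M. s1 \<noteq> s2 \<longrightarrow> \<not> r_distinguishable M s1 s2"
  shows "\<exists>s\<in>states M. S' = {s}"
proof -
  have SD': "S' \<subseteq> states M \<and> pairwise (r_distinguishable M) S' \<and>
     (\<forall>S''. S' \<subseteq> S'' \<and> S'' \<subseteq> states M \<and> pairwise (r_distinguishable M) S'' \<longrightarrow> S'' = S')"
    using assms(1) unfolding SD_def by simp
  have S1: "S' \<subseteq> states M" and S2: "pairwise (r_distinguishable M) S'" using SD' by simp_all
  have S3: "\<And>S''. S' \<subseteq> S'' \<Longrightarrow> S'' \<subseteq> states M \<Longrightarrow> pairwise (r_distinguishable M) S'' \<Longrightarrow> S'' = S'"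
    using SD' by blast
  have "S' \<noteq> {}"
  proof
    assume e: "S' = {}"
    have "{initial M} = S'" by (rule S3) (use e assms(2) in auto)
    then show False using e by simp
  qed
  then obtain s where s: "s \<in> S'" by blast
  have "S' = {s}"
  proof (rule ccontr)
    assume "S' \<noteq> {s}"
    then obtain t where t: "t \<in> S'" "t \<noteq> s" using s by blast
    have "r_distinguishable M s t" using pairwiseD[OF S2 s t(1)] t(2) by simp
    moreover have "s \<in> states M" "t \<in> states M" using S1 s t by blast+
    ultimately show False using nd[rule_format, OF \<open>s \<in> states M\<close> \<open>t \<in> states M\<close>] t(2) by simp
  qed
  then show ?thesis using s S1 by blast
qed

lemma SD_single:
  assumes "s \<in> states M"
    and nd: "\<forall>s1 \<in> states M. \<forall>s2 \<in> states M. s1 \<noteq> s2 \<longrightarrow> \<not> r_distinguishable M s1 s2"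
  shows "{s} \<in> SD M"
proof -
  have "S'' = {s}" if h1: "{s} \<subseteq> S''" and h2: "S'' \<subseteq> states M" and h3: "pairwise (r_distinguishable M) S''" for S''
  proof (rule ccontr)
    assume "S'' \<noteq> {s}"
    then obtain t where t: "t \<in> S''" "t \<noteq> s" using h1 by blast
    have sS: "s \<in> S''" using h1 by simp
    have "r_distinguishable M s t" using pairwiseD[OF h3 sS t(1)] t(2) by simp
    moreover have "t \<in> states M" using h2 t by blast
    ultimately show False using nd[rule_format, OF assms(1) \<open>t \<in> states M\<close>] t(2) by simp
  qed
  then show ?thesis unfolding SD_def using assms(1) by auto
qed

lemma process_pairs_same:
  "process_pairs M Si ps T T' \<Longrightarrow> (\<exists>s. Si = {s}) \<Longrightarrow> T' = T"
proof (induction rule: process_pairs.induct)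
  case (1 M Si T) then show ?case by simp
next
  case (2 M Si T p T' ps T'')
  then show ?case unfolding pair_step_def Let_def by auto
qed

lemma process_D_same:
  "process_D M m V ds T T' \<Longrightarrow> (\<forall>S\<in>SD M. \<exists>s. S = {s}) \<Longrightarrow> T' = T"
proof (induction rule: process_D.induct)
  case (1 M m V T) then show ?case by simp
next
  case (2 Si M s io m ps V T T' ds T'')
  have "Si \<in> SD M" using 2(1) term_set_mem[of Si M s io m] by blast
  then have "T' = T" using process_pairs_same[OF 2(4)] 2(7) by auto
  then show ?case using 2 by auto
qed


lemma visits_take:
  assumes "k \<le> length io"
  shows "visits M s (take k io) S = card {i. 1 \<le> i \<and> i \<le> k \<and> after M s (take i io) \<in> S}"
proof -
  have "{i. 1 \<le> i \<and> i \<le> length (take k io) \<and> after M s (take i (take k io)) \<in> S}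
      = {i. 1 \<le> i \<and> i \<le> k \<and> after M s (take i io) \<in> S}"
    using assms by (auto simp: min_def)
  then show ?thesis unfolding visits_def by simp
qed

lemma part1:
  fixes M :: "('s, 'x, 'y) fsm" and n m :: nat
  assumes wf: "well_formed M"
    and obs: "observable M"
    and cn: "card (states M) = n"
    and dr: "d_reachable_states M = {initial M}"
    and nd: "\<forall>s1 \<in> states M. \<forall>s2 \<in> states M. s1 \<noteq> s2 \<longrightarrow> \<not> r_distinguishable M s1 s2"
    and mn: "m \<ge> n"
    and io: "io \<in> L M" "length io = m * n"
  shows "\<exists>\<pi>. prefix \<pi> io \<and> term_set M (initial M) \<pi> m \<noteq> {}"
proof -
  define s0 where "s0 = initial M"
  have s0S: "s0 \<in> states M" and fin: "finite (states M)" using wf unfolding well_formed_def s0_def by auto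
  have n1: "n \<ge> 1" using cn fin s0S by (metis One_nat_def Suc_leI card_gt_0_iff empty_iff)
  have m1: "m \<ge> 1" using n1 mn by simp
  have tr: "is_trace M s0 io" using io unfolding LS_def s0_def by simp
  define thr where "thr t = (if t = s0 then m else m + 1)" for t
  define cnt where "cnt k t = card {i. 1 \<le> i \<and> i \<le> k \<and> after M s0 (take i io) = t}" for k t
  have cntfin: "finite {i. 1 \<le> i \<and> i \<le> k \<and> after M s0 (take i io) = t}" for k t
    by (rule finite_subset[of _ "{..k}"]) auto
  have vis: "visits M s0 (take k io) {t} = cnt k t" if "k \<le> length io" for k t
    using visits_take[OF that, of M s0 "{t}"] unfolding cnt_def by simp
  have thr_eq: "(int (visits M s0 (take k io) {t}) = int m - int (card ({t} \<inter> d_reachable_states M)) + 1)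
      \<longleftrightarrow> cnt k t = thr t" if "k \<le> length io" for k t
    using vis[OF that] unfolding thr_def dr s0_def by auto
  have A: "\<exists>t\<in>states M. cnt k t = thr t"
    if kl: "k \<le> length io" and ne: "term_set M s0 (take k io) m \<noteq> {}" for k
  proof -
    obtain S where S: "S \<in> term_set M s0 (take k io) m" using ne by auto
    then have SSD: "S \<in> SD M" and eq: "int (visits M s0 (take k io) S) = int m - int (card (S \<inter> d_reachable_states M)) + 1"
      using term_set_mem[of S M s0 "take k io" m] by blast+
    obtain t where t: "t \<in> states M" "S = {t}" using SD_sub[OF SSD _ nd] wf unfolding well_formed_def by auto
    show ?thesis using eq thr_eq[OF kl] t by auto
  qed
  have B: "term_set M s0 (take k io) m \<noteq> {}"
    if "k \<le> length io" "t \<in> states M" "cnt k t = thr t" "\<forall>i<k. term_set M s0 (take i io) m = {}" for k t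
  proof -
    have "{t} \<in> SD M" using SD_single[OF that(2) nd] .
    moreover have "\<forall>i<length (take k io). term_set M s0 (take i (take k io)) m = {}"
      using that(1,4) by (auto simp: min_def)
    ultimately have "{t} \<in> term_set M s0 (take k io) m"
      using thr_eq[OF that(1), of t] that(3) term_set_mem[of "{t}" M s0 "take k io" m] by blast
    then show ?thesis by auto
  qed
  define Q where "Q k \<longleftrightarrow> (\<exists>t\<in>states M. cnt k t \<ge> thr t)" for k
  have QL: "Q (length io)"
  proof (rule ccontr)
    assume "\<not> Q (length io)"
    then have lt: "\<And>t. t \<in> states M \<Longrightarrow> cnt (length io) t < thr t" unfolding Q_def by auto
    have "{1..length io} \<subseteq> (\<Union>t\<in>states M. {i. 1 \<le> i \<and> i \<le> length io \<and> after M s0 (take i io) = t})"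
    proof
      fix i assume "i \<in> {1..length io}"
      moreover have "after M s0 (take i io) \<in> states M"
        using after_states[OF wf obs is_trace_take[OF tr] s0S] .
      ultimately show "i \<in> (\<Union>t\<in>states M. {i. 1 \<le> i \<and> i \<le> length io \<and> after M s0 (take i io) = t})" by auto
    qed
    then have "card {1..length io} \<le> card (\<Union>t\<in>states M. {i. 1 \<le> i \<and> i \<le> length io \<and> after M s0 (take i io) = t})"
      by (intro card_mono) (use fin cntfin in auto)
    also have "\<dots> \<le> (\<Sum>t\<in>states M. cnt (length io) t)"
      unfolding cnt_def by (rule card_UN_le[OF fin])
    finally have "length io \<le> (\<Sum>t\<in>states M. cnt (length io) t)" by simp
    moreover have "(\<Sum>t\<in>states M. cnt (length io) t) + 1 \<le> n * m"
    proof -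
      have "(\<Sum>t\<in>states M. cnt (length io) t) + 1 = (\<Sum>t\<in>states M. cnt (length io) t + (if t = s0 then 1 else 0))"
        using fin s0S by (simp add: sum.distrib)
      also have "\<dots> \<le> (\<Sum>t\<in>states M. m)"
        by (rule sum_mono) (use lt in \<open>fastforce simp: thr_def\<close>)
      also have "\<dots> = n * m" using cn by simp
      finally show ?thesis .
    qed
    ultimately show False using io(2) by (simp add: mult.commute)
  qed
  obtain k where kQ: "Q k" and kmin: "\<And>j. Q j \<Longrightarrow> k \<le> j"
    using QL by (metis exists_least_iff not_le)
  have kL: "k \<le> length io" using kmin[OF QL] .
  have cnt0: "cnt 0 t = 0" for t unfolding cnt_def by simp
  have "k \<noteq> 0"
  proof
    assume "k = 0"
    then show False using kQ m1 cnt0 unfolding Q_def thr_def by (auto split: if_splits)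
  qed
  then obtain j where kj: "k = Suc j" by (cases k) auto
  have nQj: "\<not> Q j" using kmin kj by fastforce
  obtain t where t: "t \<in> states M" "cnt k t \<ge> thr t" using kQ unfolding Q_def by auto
  have step: "cnt (Suc j) t \<le> cnt j t + 1"
  proof -
    have "{i. 1 \<le> i \<and> i \<le> Suc j \<and> after M s0 (take i io) = t} \<subseteq>
          insert (Suc j) {i. 1 \<le> i \<and> i \<le> j \<and> after M s0 (take i io) = t}" by auto
    then have "cnt (Suc j) t \<le> card (insert (Suc j) {i. 1 \<le> i \<and> i \<le> j \<and> after M s0 (take i io) = t})"
      unfolding cnt_def by (intro card_mono) (auto intro: cntfin)
    also have "\<dots> \<le> cnt j t + 1" unfolding cnt_def using card_insert_le_m1
      by (simp add: card_insert_if cntfin)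
    finally show ?thesis .
  qed
  have "cnt j t < thr t" using nQj t(1) unfolding Q_def by auto
  then have ceq: "cnt k t = thr t" using t(2) step kj by auto
  have "\<forall>i<k. term_set M s0 (take i io) m = {}"
  proof (intro allI impI)
    fix i assume "i < k"
    show "term_set M s0 (take i io) m = {}"
    proof (rule ccontr)
      assume "term_set M s0 (take i io) m \<noteq> {}"
      then obtain u where "u \<in> states M" "cnt i u = thr u" using A[of i] \<open>i < k\<close> kL by (meson less_imp_le order_trans)
      then have "Q i" unfolding Q_def by (metis order_refl)
      then show False using kmin \<open>i < k\<close> by fastforce
    qed
  qed
  then have "term_set M s0 (take k io) m \<noteq> {}" using B[OF kL t(1) ceq] by blast
  then show ?thesis unfolding s0_def by (intro exI[of _ "take k io"]) (simp add: take_is_prefix)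
qed


theorem mainTheorem4:
  fixes M :: "('s, 'x, 'y) fsm" and n m :: nat
  assumes "well_formed M"
    and "observable M"
    and "card (states M) = n"
    and "\<forall>s \<in> states M. reachable M s"
    and "d_reachable_states M = {initial M}"
    and "\<forall>s1 \<in> states M. \<forall>s2 \<in> states M. s1 \<noteq> s2 \<longrightarrow> \<not> r_distinguishable M s1 s2"
    and "m \<ge> n"
  shows "(\<forall>io \<in> L M. length io = m * n \<longrightarrow> (\<exists>\<pi>. prefix \<pi> io \<and> term_set M (initial M) \<pi> m \<noteq> {}))
       \<and> Tr M (initial M) m \<subseteq> {xs \<in> lists (inputs M). length xs \<le> m * n}
       \<and> (\<forall>T. generated_suite M m T \<longrightarrow> finite T \<and> card T \<le> card (inputs M) ^ (m * n))"
proof -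
  note wf = assms(1) and obs = assms(2) and cn = assms(3) and dr = assms(5) and nd = assms(6) and mn = assms(7)
  have P1: "\<forall>io \<in> L M. length io = m * n \<longrightarrow> (\<exists>\<pi>. prefix \<pi> io \<and> term_set M (initial M) \<pi> m \<noteq> {})"
    using part1[OF wf obs cn dr nd mn] by blast
  define G where "G = {xs \<in> lists (inputs M). length xs \<le> m * n}"
  have P2: "Tr M (initial M) m \<subseteq> G"
  proof
    fix xs assume "xs \<in> Tr M (initial M) m"
    then obtain io where io: "io \<in> L M" "term_set M (initial M) io m \<noteq> {}" "prefix xs (map fst io)"
      unfolding Tr_def Pref_def by blast
    have tr: "is_trace M (initial M) io" using io(1) unfolding LS_def by simp
    have len: "length io \<le> m * n"
    proof (rule ccontr)
      assume "\<not> length io \<le> m * n"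
      then have lt: "m * n < length io" by simp
      define io' where "io' = take (m * n) io"
      have "io' \<in> L M" using is_trace_take[OF tr] unfolding io'_def LS_def by simp
      moreover have "length io' = m * n" using lt unfolding io'_def by simp
      ultimately obtain \<pi> where pi: "prefix \<pi> io'" "term_set M (initial M) \<pi> m \<noteq> {}"
        using P1 by blast
      have pl: "length \<pi> \<le> m * n" using prefix_length_le[OF pi(1)] \<open>length io' = m * n\<close> by simp
      have "\<pi> = take (length \<pi>) io'" using pi(1) by (metis append_eq_conv_conj prefix_def)
      then have pe: "\<pi> = take (length \<pi>) io" unfolding io'_def using pl by (simp add: min_def)
      obtain S where "S \<in> term_set M (initial M) io m" using io(2) by auto
      then have "\<forall>i<length io. term_set M (initial M) (take i io) m = {}"
        unfolding term_set_mem[of S M "initial M" io m] by (elim conjE)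
      then have "term_set M (initial M) (take (length \<pi>) io) m = {}" using pl lt by simp
      then show False using pi(2) pe by simp
    qed
    have "length xs \<le> m * n" using prefix_length_le[OF io(3)] len by simp
    moreover have "set xs \<subseteq> inputs M"
      using trace_inputs[OF wf tr] io(3) set_mono_prefix by blast
    ultimately show "xs \<in> G" unfolding G_def by auto
  qed
  have P3: "finite T \<and> card T \<le> card (inputs M) ^ (m * n)" if gs: "generated_suite M m T" for T
  proof -
    obtain V ds Tfin where sc: "state_cover M V" and pd: "process_D M m V ds (initial_T M m V) Tfin"
      and Tdef: "T = {t \<in> Tfin. \<not> (\<exists>t' \<in> Tfin. strict_prefix t t')}"
      using gs unfolding generated_suite_def by blast
    have s0S: "initial M \<in> states M" and finI: "finite (inputs M)" and neI: "inputs M \<noteq> {}"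
      using wf unfolding well_formed_def by auto
    have "\<forall>S\<in>SD M. \<exists>s. S = {s}" using SD_sub[OF _ s0S nd] by blast
    then have Tfin: "Tfin = initial_T M m V" using process_D_same[OF pd] by simp
    have sd: "strongly_defined M []" unfolding strongly_defined_def by simp
    have "{after M (initial M) (zip [] ys) | ys. length ys = length ([]::'x list) \<and> zip [] ys \<in> L M} = {initial M}"
      unfolding LS_def by auto
    then have dre: "d_reaches M [] (initial M)"
      unfolding d_reaches_def using sd by blast
    have sc0: "[] \<in> V \<and> (\<forall>v \<in> V. \<exists>s \<in> d_reachable_states M. d_reaches M v s)
     \<and> (\<forall>s \<in> d_reachable_states M. \<exists>!v. v \<in> V \<and> d_reaches M v s)"
      using sc unfolding state_cover_def .
    have i0: "initial M \<in> d_reachable_states M" using dr by simp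
    have ex1: "\<exists>!v. v \<in> V \<and> d_reaches M v (initial M)" using bspec[OF conjunct2[OF conjunct2[OF sc0]] i0] .
    have cs: "cover_seq M V (initial M) = []"
      unfolding cover_seq_def using the1_equality[OF ex1 conjI[OF conjunct1[OF sc0] dre]] .
    have "initial_T M m V = dot {[]} (Tr M (initial M) m)"
      using cs by (simp add: initial_T_def dr)
    also have "\<dots> \<subseteq> G" using P2 unfolding dot_def G_def by auto
    finally have TG: "T \<subseteq> G" using Tfin Tdef by auto
    have GG: "G = {xs. set xs \<subseteq> inputs M \<and> length xs \<le> m * n}" unfolding G_def by auto
    have finG: "finite G" unfolding GG by (rule finite_lists_length_le[OF finI])
    have finT: "finite T" using finite_subset[OF TG finG] .
    obtain x0 where x0: "x0 \<in> inputs M" using neI by auto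
    define f where "f t = t @ replicate (m * n - length t) x0" for t
    have inj: "inj_on f T"
    proof (rule inj_onI)
      fix t1 t2 assume t1: "t1 \<in> T" and t2: "t2 \<in> T" and eq: "f t1 = f t2"
      have p1: "prefix t1 (f t1)" "prefix t2 (f t2)" unfolding f_def by simp_all
      then have "prefix t1 (f t1)" "prefix t2 (f t1)" using eq by simp_all
      then have "prefix t1 t2 \<or> prefix t2 t1" using prefix_same_cases by blast
      then show "t1 = t2"
      proof
        assume "prefix t1 t2"
        then show ?thesis using t1 t2 unfolding Tdef strict_prefix_def by blast
      next
        assume "prefix t2 t1"
        then show ?thesis using t1 t2 unfolding Tdef strict_prefix_def by blast
      qed
    qed
    have img: "f ` T \<subseteq> {xs. set xs \<subseteq> inputs M \<and> length xs = m * n}"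
    proof
      fix z assume "z \<in> f ` T"
      then obtain t where t: "t \<in> T" "z = f t" by auto
      then have "t \<in> G" using TG by auto
      then show "z \<in> {xs. set xs \<subseteq> inputs M \<and> length xs = m * n}"
        using t x0 unfolding f_def G_def by auto
    qed
    have "card T = card (f ` T)" using card_image[OF inj] by simp
    also have "\<dots> \<le> card {xs. set xs \<subseteq> inputs M \<and> length xs = m * n}"
      by (rule card_mono[OF _ img]) (rule finite_lists_length_eq[OF finI])
    also have "\<dots> = card (inputs M) ^ (m * n)" by (rule card_lists_length_eq[OF finI])
    finally show ?thesis using finT by simp
  qed
  show ?thesis using P1 P2 P3 unfolding G_def by blast
qed

end
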